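(* Let $n\ge1$, $\mu\in(0,1)$ and $\eta>4\mu n^2$. Let $x_*=(1+\eta,1+\frac\eta2,\dots,1+\frac\eta n)$, $\hat f(x)=\|x-x_*\|_\infty$ and $f_\mu(x)=\min_{u\in\mathbb{R}^n}\hat f(u)+\frac1{2\mu}\|x-u\|^2$. Let $p\in\{0,\dots,n-1\}$. For any $x\in\mathbb{R}^n$ with $\max_{i=p+1,\dots,n}|x^{(i)}|\le\mu$, we have $\nabla f_\mu(x)\in E_{p+1}$ and $\|\nabla f_\mu(x)\|_\infty\le 1$.
   Context: $(e_1,\dots,e_n)$ is the canonical basis of $\mathbb{R}^n$, $E_p=\operatorname{Span}(e_1,\dots,e_p)$ for $p\ge1$ and $E_0=\{0\}$. $\|\cdot\|$ is the Euclidean norm; $x^{(i)}$ is the $i$-th coordinate. $f_\mu$ (the Moreau envelope of $\hat f$) is differentiable. *)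

theory Defs
  imports "HOL-Analysis.Analysis"
begin

text \<open>Coordinates of \<open>real ^ 'n\<close> are indexed by a finite linearly ordered type;
  the coordinate \<open>k\<close> is the \<open>idx k\<close>-th coordinate (1-based), so \<open>n = CARD('n)\<close>.\<close>

definition idx :: "'n::{finite,linorder} \<Rightarrow> nat" where
  "idx k = card {j. j \<le> k}"

definition Espan :: "nat \<Rightarrow> (real ^ 'n::{finite,linorder}) set" where
  "Espan p = {x. \<forall>k. p < idx k \<longrightarrow> x $ k = 0}"

definition xstar :: "real \<Rightarrow> real ^ 'n::{finite,linorder}" where
  "xstar \<eta> = (\<chi> k. 1 + \<eta> / real (idx k))"

definition fhat :: "real \<Rightarrow> real ^ 'n::{finite,linorder} \<Rightarrow> real" where
  "fhat \<eta> x = infnorm (x - xstar \<eta>)"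

definition fmu :: "real \<Rightarrow> real \<Rightarrow> real ^ 'n::{finite,linorder} \<Rightarrow> real" where
  "fmu \<eta> \<mu> x = Inf (range (\<lambda>u. fhat \<eta> u + (norm (x - u))^2 / (2 * \<mu>)))"

end

theory Submission
  imports Defs
begin

lemma idx_ge1: "1 \<le> idx (k::'n::{finite,linorder})"
  unfolding idx_def by (subgoal_tac "k \<in> {j. j \<le> k}") (auto simp: Suc_le_eq card_gt_0_iff)

lemma idx_le: "idx (k::'n::{finite,linorder}) \<le> CARD('n)"
  unfolding idx_def by (rule card_mono) auto

lemma idx_strict: "(k::'n::{finite,linorder}) < k' \<Longrightarrow> idx k < idx k'"
  unfolding idx_def
proof (rule psubset_card_mono)
  assume "k < k'"
  then have "k' \<in> {j. j \<le> k'}" "k' \<notin> {j. j \<le> k}" by auto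
  then show "{j. j \<le> k} \<subset> {j. j \<le> k'}" using \<open>k < k'\<close> by auto
qed auto

lemma idx_inj: "inj (idx :: 'n::{finite,linorder} \<Rightarrow> nat)"
  by (metis idx_strict injI less_irrefl neqE)

lemma idx_surj: "idx ` (UNIV::'n::{finite,linorder} set) = {1..CARD('n)}"
proof (rule card_subset_eq)
  show "idx ` (UNIV::'n set) \<subseteq> {1..CARD('n)}" using idx_ge1 idx_le by auto
  show "card (idx ` (UNIV::'n set)) = card {1..CARD('n)}"
    using card_image[OF idx_inj] by simp
qed auto

lemma infnorm_le_cart: "(\<And>i. \<bar>(x::real^'n) $ i\<bar> \<le> e) \<Longrightarrow> infnorm x \<le> e"
  unfolding infnorm_cart by (rule cSup_least) auto

lemma inner_le_infnorm:
  fixes g v :: "real^'n"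
  assumes "(\<Sum>i\<in>UNIV. \<bar>g $ i\<bar>) \<le> 1"
  shows "g \<bullet> v \<le> infnorm v"
proof -
  have "g \<bullet> v = (\<Sum>i\<in>UNIV. g$i * v$i)" by (simp add: inner_vec_def)
  also have "\<dots> \<le> (\<Sum>i\<in>UNIV. \<bar>g$i\<bar> * infnorm v)"
  proof (rule sum_mono)
    fix i
    have "g$i * v$i \<le> \<bar>g$i\<bar> * \<bar>v$i\<bar>" by (simp add: abs_mult[symmetric])
    also have "\<dots> \<le> \<bar>g$i\<bar> * infnorm v" by (simp add: component_le_infnorm_cart mult_left_mono)
    finally show "g$i * v$i \<le> \<bar>g$i\<bar> * infnorm v" .
  qed
  also have "\<dots> = (\<Sum>i\<in>UNIV. \<bar>g$i\<bar>) * infnorm v" by (simp add: sum_distrib_right)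
  also have "\<dots> \<le> infnorm v" using assms infnorm_pos_le[of v]
    by (simp add: mult_left_le_one_le)
  finally show ?thesis .
qed

lemma sandwich_deriv:
  fixes F :: "'a::real_inner \<Rightarrow> real"
  assumes mu: "0 < \<mu>"
    and b: "\<And>z. c + g \<bullet> (z - x) \<le> F z \<and> F z \<le> c + g \<bullet> (z - x) + (norm (z - x))^2 / (2*\<mu>)"
  shows "(F has_derivative (\<lambda>h. g \<bullet> h)) (at x)"
proof -
  have Fx: "F x = c" using b[of x] by simp
  have bl: "bounded_linear (\<lambda>h. g \<bullet> h)" by (rule bounded_linear_inner_right)
  have "((\<lambda>h. norm (F (x + h) - F x - g \<bullet> h) / norm h) \<longlongrightarrow> 0) (at 0)"
  proof (rule tendsto_sandwich[where f="\<lambda>_. 0" and h="\<lambda>h. norm h / (2*\<mu>)"])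
    show "\<forall>\<^sub>F h in at 0. 0 \<le> norm (F (x + h) - F x - g \<bullet> h) / norm h" by simp
    show "\<forall>\<^sub>F h in at 0. norm (F (x + h) - F x - g \<bullet> h) / norm h \<le> norm h / (2*\<mu>)"
    proof (rule always_eventually, rule allI)
      fix h :: 'a
      have "norm (F (x + h) - F x - g \<bullet> h) \<le> (norm h)^2 / (2*\<mu>)"
        using b[of "x+h"] Fx by auto
      then have "norm (F (x + h) - F x - g \<bullet> h) / norm h \<le> (norm h)^2 / (2*\<mu>) / norm h"
        by (rule divide_right_mono) simp
      also have "\<dots> = norm h / (2*\<mu>)"
        by (cases "h = 0") (auto simp: power2_eq_square)
      finally show "norm (F (x + h) - F x - g \<bullet> h) / norm h \<le> norm h / (2*\<mu>)" .
    qed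
    show "((\<lambda>_. 0) \<longlongrightarrow> (0::real)) (at 0)" by simp
    show "((\<lambda>h. norm h / (2*\<mu>)) \<longlongrightarrow> (0::real)) (at (0::'a))"
      using mu by (auto intro!: tendsto_eq_intros)
  qed
  then show ?thesis using bl by (simp add: has_derivative_at)
qed

lemma norm_sq_expand:
  fixes a b :: "'a::real_inner"
  shows "(norm (a - t *\<^sub>R b))^2 = (norm a)^2 - 2*t*(b \<bullet> a) + t^2 * (norm b)^2"
proof -
  have "(norm (a - t *\<^sub>R b))^2 = (a - t *\<^sub>R b) \<bullet> (a - t *\<^sub>R b)" by (simp add: dot_square_norm)
  also have "\<dots> = a \<bullet> a - 2*t*(b \<bullet> a) + t^2 * (b \<bullet> b)"
    by (simp add: inner_diff_left inner_diff_right inner_commute algebra_simps power2_eq_square)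
  finally show ?thesis by (simp add: dot_square_norm)
qed

lemma moreau_bounds:
  fixes g x z :: "real ^ 'n::{finite,linorder}"
  assumes mu: "0 < \<mu>"
    and A: "\<And>v. g \<bullet> v \<le> infnorm v"
    and B: "infnorm (x - xstar \<eta> - \<mu> *\<^sub>R g) \<le> g \<bullet> (x - xstar \<eta> - \<mu> *\<^sub>R g)"
  defines "c \<equiv> g \<bullet> (x - xstar \<eta>) - \<mu> * (norm g)^2 / 2"
  shows "c + g \<bullet> (z - x) \<le> fmu \<eta> \<mu> z \<and> fmu \<eta> \<mu> z \<le> c + g \<bullet> (z - x) + (norm (z - x))^2 / (2*\<mu>)"
proof -
  define \<phi> where "\<phi> u = fhat \<eta> u + (norm (z - u))^2 / (2 * \<mu>)" for u :: "real^'n::{finite,linorder}"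
  have low: "c + g \<bullet> (z - x) \<le> \<phi> u" for u
  proof -
    have f: "g \<bullet> (u - xstar \<eta>) \<le> fhat \<eta> u" unfolding fhat_def by (rule A)
    have n: "(norm (z - u - \<mu> *\<^sub>R g))^2 = (norm (z - u))^2 - 2*\<mu>*(g \<bullet> (z - u)) + \<mu>^2 * (norm g)^2"
      using norm_sq_expand[of "z - u" \<mu> g] by simp
    have "0 \<le> (norm (z - u - \<mu> *\<^sub>R g))^2 / (2*\<mu>)" using mu by simp
    also have "\<dots> = (norm (z - u))^2 / (2*\<mu>) - g \<bullet> (z - u) + \<mu> * (norm g)^2 / 2"
      unfolding n using mu by (simp add: field_simps power2_eq_square)
    finally have "0 \<le> (norm (z - u))^2 / (2*\<mu>) - g \<bullet> (z - u) + \<mu> * (norm g)^2 / 2" .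
    then show ?thesis using f unfolding \<phi>_def c_def
      by (simp add: inner_diff_right algebra_simps)
  qed
  have up: "\<phi> (x - \<mu> *\<^sub>R g) \<le> c + g \<bullet> (z - x) + (norm (z - x))^2 / (2*\<mu>)"
  proof -
    have f: "fhat \<eta> (x - \<mu> *\<^sub>R g) \<le> g \<bullet> (x - xstar \<eta>) - \<mu> * (norm g)^2"
      using B unfolding fhat_def
      by (simp add: inner_diff_right power2_norm_eq_inner algebra_simps)
    have n: "(norm (z - (x - \<mu> *\<^sub>R g)))^2 = (norm (z - x))^2 + 2*\<mu>*(g \<bullet> (z - x)) + \<mu>^2 * (norm g)^2"
      using norm_sq_expand[of "z - x" "-\<mu>" g] by (simp add: algebra_simps)
    have "(norm (z - (x - \<mu> *\<^sub>R g)))^2 / (2*\<mu>) = (norm (z - x))^2 / (2*\<mu>) + g \<bullet> (z - x) + \<mu> * (norm g)^2 / 2"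
      unfolding n using mu by (simp add: field_simps power2_eq_square)
    then show ?thesis using f unfolding \<phi>_def c_def by simp
  qed
  have fm: "fmu \<eta> \<mu> z = Inf (range \<phi>)" unfolding fmu_def \<phi>_def by simp
  have bdd: "bdd_below (range \<phi>)" using low by (auto intro!: bdd_belowI)
  have "c + g \<bullet> (z - x) \<le> Inf (range \<phi>)" using low by (auto intro!: cINF_greatest)
  moreover have "Inf (range \<phi>) \<le> \<phi> (x - \<mu> *\<^sub>R g)" using bdd by (rule cINF_lower) simp
  ultimately show ?thesis using up fm by simp
qed

lemma soft_threshold:
  fixes y :: "real^'n::{finite,linorder}"
  assumes mu: "0 < \<mu>" and big: "\<mu> \<le> (\<Sum>i\<in>UNIV. \<bar>y$i\<bar>)"
  obtains \<tau> where "0 \<le> \<tau>" "(\<Sum>i\<in>UNIV. max (\<bar>y$i\<bar> - \<tau>) 0) = \<mu>"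
proof -
  define S where "S = (\<Sum>i\<in>UNIV. \<bar>y$i\<bar>)"
  define \<phi> where "\<phi> t = (\<Sum>i\<in>UNIV. max (\<bar>y$i\<bar> - t) 0)" for t
  have "\<phi> S = 0" unfolding \<phi>_def S_def
  proof (rule sum.neutral, rule ballI)
    fix i :: 'n
    have "\<bar>y$i\<bar> \<le> (\<Sum>i\<in>UNIV. \<bar>y$i\<bar>)" by (rule member_le_sum) auto
    then show "max (\<bar>y$i\<bar> - (\<Sum>i\<in>UNIV. \<bar>y$i\<bar>)) 0 = 0" by simp
  qed
  moreover have "\<phi> 0 = S" unfolding \<phi>_def S_def by simp
  moreover have "0 \<le> S" unfolding S_def by (simp add: sum_nonneg)
  moreover have "isCont \<phi> t" for t unfolding \<phi>_def by (intro continuous_intros)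
  ultimately obtain t where "0 \<le> t" "t \<le> S" "\<phi> t = \<mu>"
    using IVT2[of \<phi> S \<mu> 0] big mu S_def by auto
  then show ?thesis using that \<phi>_def by auto
qed

lemma soft_props:
  fixes y :: "real^'n::{finite,linorder}"
  assumes mu: "0 < \<mu>" and tau: "0 \<le> \<tau>" and phi: "(\<Sum>i\<in>UNIV. max (\<bar>y$i\<bar> - \<tau>) 0) = \<mu>"
  defines "g \<equiv> (\<chi> i. sgn (y$i) * max (\<bar>y$i\<bar> - \<tau>) 0 / \<mu>)"
  shows "(\<Sum>i\<in>UNIV. \<bar>g$i\<bar>) = 1"
    and "\<And>i. \<bar>g$i\<bar> \<le> 1"
    and "infnorm (y - \<mu> *\<^sub>R g) \<le> g \<bullet> (y - \<mu> *\<^sub>R g)"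
    and "\<And>k. \<bar>y$k\<bar> \<le> \<tau> \<Longrightarrow> g$k = 0"
proof -
  have ag: "\<bar>g$i\<bar> = max (\<bar>y$i\<bar> - \<tau>) 0 / \<mu>" for i
    using mu tau by (cases "y$i = 0") (auto simp: g_def abs_mult abs_sgn_eq)
  show s1: "(\<Sum>i\<in>UNIV. \<bar>g$i\<bar>) = 1"
    unfolding ag using mu phi by (simp add: sum_divide_distrib[symmetric])
  show "\<bar>g$i\<bar> \<le> 1" for i
  proof -
    have "\<bar>g$i\<bar> \<le> (\<Sum>i\<in>UNIV. \<bar>g$i\<bar>)" by (rule member_le_sum) auto
    then show ?thesis using s1 by simp
  qed
  show "g$k = 0" if "\<bar>y$k\<bar> \<le> \<tau>" for k using that by (simp add: g_def)
  have comp: "\<bar>(y - \<mu> *\<^sub>R g)$i\<bar> \<le> \<tau>" for i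
  proof (cases "\<bar>y$i\<bar> \<le> \<tau>")
    case True then show ?thesis by (simp add: g_def)
  next
    case False
    then have "y$i \<noteq> 0" using tau by auto
    then have "(y - \<mu> *\<^sub>R g)$i = sgn (y$i) * \<tau>" using False mu
      by (cases "y$i > 0") (auto simp: g_def sgn_if)
    then show ?thesis using tau by (simp add: abs_mult abs_sgn_eq)
  qed
  have trm: "g$i * (y - \<mu> *\<^sub>R g)$i = \<tau> * (max (\<bar>y$i\<bar> - \<tau>) 0 / \<mu>)" for i
  proof (cases "\<bar>y$i\<bar> \<le> \<tau>")
    case True then show ?thesis by (simp add: g_def)
  next
    case False
    then have "y$i \<noteq> 0" using tau by auto
    then show ?thesis using False mu
      by (cases "y$i > 0") (auto simp: g_def sgn_if field_simps)
  qed
  have "g \<bullet> (y - \<mu> *\<^sub>R g) = (\<Sum>i\<in>UNIV. g$i * (y - \<mu> *\<^sub>R g)$i)"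
    by (simp only: inner_vec_def inner_real_def)
  also have "\<dots> = \<tau> * ((\<Sum>i\<in>UNIV. max (\<bar>y$i\<bar> - \<tau>) 0) / \<mu>)"
    unfolding trm by (simp add: sum_distrib_left sum_divide_distrib)
  also have "\<dots> = \<tau>" using phi mu by simp
  finally show "infnorm (y - \<mu> *\<^sub>R g) \<le> g \<bullet> (y - \<mu> *\<^sub>R g)"
    using infnorm_le_cart[OF comp] by simp
qed

lemma gap_lemma:
  fixes a b N \<eta> \<mu> :: real
  assumes "1 \<le> a" "a + 1 \<le> b" "b \<le> N" "\<eta> > 4 * \<mu> * N^2" "0 < \<mu>"
  shows "\<eta> / a - \<eta> / b > 4 * \<mu>"
proof -
  have e: "\<eta> > 0" using assms by (smt (verit) mult_pos_pos zero_less_power)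
  have ab: "0 < a * b" using assms by simp
  have "\<eta> / a - \<eta> / b = \<eta> * (b - a) / (a * b)" using assms by (simp add: field_simps)
  also have "\<dots> \<ge> \<eta> / (a * b)" using e ab assms by (simp add: divide_right_mono)
  finally have 1: "\<eta> / a - \<eta> / b \<ge> \<eta> / (a * b)" .
  have "a * b \<le> N^2" using assms by (simp add: power2_eq_square mult_mono)
  then have "\<eta> / (a * b) \<ge> \<eta> / N^2" using e ab by (simp add: frac_le)
  moreover have "\<eta> / N^2 > 4 * \<mu>" using assms by (simp add: field_simps)
  ultimately show ?thesis using 1 by linarith
qed

theorem lemma3p5:
  fixes \<mu> \<eta> :: real and p :: nat and x :: "real ^ 'n::{finite,linorder}"
  assumes "0 < \<mu>" and "\<mu> < 1"
    and "\<eta> > 4 * \<mu> * (real CARD('n))^2"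
    and "p < CARD('n)"
    and "\<forall>k::'n. p < idx k \<longrightarrow> \<bar>x $ k\<bar> \<le> \<mu>"
  shows "\<exists>g. (fmu \<eta> \<mu> has_derivative (\<lambda>h. g \<bullet> h)) (at x)
              \<and> g \<in> Espan (p + 1) \<and> infnorm g \<le> 1"
proof -
  note mu = assms(1) and mu1 = assms(2) and eta = assms(3) and pn = assms(4) and xb = assms(5)
  define N where "N = real CARD('n)"
  have N1: "1 \<le> N" unfolding N_def by simp
  have e: "\<eta> > 0" using eta mu N1 unfolding N_def[symmetric]
    by (smt (verit) mult_pos_pos zero_less_power)
  define y where "y = x - xstar \<eta>"
  have yk: "1 + \<eta> / real (idx k) - \<mu> \<le> \<bar>y$k\<bar> \<and> \<bar>y$k\<bar> \<le> 1 + \<eta> / real (idx k) + \<mu>"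
    if "p < idx k" for k
  proof -
    have "0 \<le> \<eta> / real (idx k)" using e by simp
    moreover have "\<bar>x$k\<bar> \<le> \<mu>" using xb that by auto
    moreover have "y$k = x$k - (1 + \<eta> / real (idx k))" by (simp add: y_def xstar_def)
    ultimately show ?thesis using mu1 by linarith
  qed
  have "p + 1 \<in> idx ` (UNIV::'n set)" unfolding idx_surj using pn by auto
  then obtain j :: 'n where j: "idx j = p + 1" by auto
  have yj: "1 + \<eta> / real (p+1) - \<mu> \<le> \<bar>y$j\<bar>" using yk[of j] j by simp
  have "\<eta> / real (p+1) \<ge> \<eta> / N" using e pn unfolding N_def
    by (intro divide_left_mono) auto
  moreover have "\<eta> / N > 4 * \<mu>"
  proof -
    have "4 * \<mu> * N \<le> 4 * \<mu> * N^2" using mu N1 by (simp add: power2_eq_square)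
    then have "\<eta> > 4 * \<mu> * N" using eta N_def by simp
    then show ?thesis using N1 by (simp add: field_simps)
  qed
  ultimately have "\<mu> \<le> \<bar>y$j\<bar>" using yj mu by linarith
  also have "\<bar>y$j\<bar> \<le> (\<Sum>i\<in>UNIV. \<bar>y$i\<bar>)" by (rule member_le_sum) auto
  finally have big: "\<mu> \<le> (\<Sum>i\<in>UNIV. \<bar>y$i\<bar>)" .
  obtain \<tau> where tau: "0 \<le> \<tau>" and phi: "(\<Sum>i\<in>UNIV. max (\<bar>y$i\<bar> - \<tau>) 0) = \<mu>"
    using soft_threshold[OF mu big] by blast
  define g where "g = (\<chi> i. sgn (y$i) * max (\<bar>y$i\<bar> - \<tau>) 0 / \<mu>)"
  note P = soft_props[OF mu tau phi, folded g_def]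
  have A: "g \<bullet> v \<le> infnorm v" for v by (rule inner_le_infnorm) (simp add: P(1))
  have B: "infnorm (x - xstar \<eta> - \<mu> *\<^sub>R g) \<le> g \<bullet> (x - xstar \<eta> - \<mu> *\<^sub>R g)"
    using P(3) by (simp add: y_def)
  have D: "(fmu \<eta> \<mu> has_derivative (\<lambda>h. g \<bullet> h)) (at x)"
    by (rule sandwich_deriv[OF mu moreau_bounds[OF mu A B]])
  have I: "infnorm g \<le> 1" by (rule infnorm_le_cart) (rule P(2))
  have E: "g \<in> Espan (p + 1)"
    unfolding Espan_def
  proof (intro CollectI allI impI)
    fix k :: 'n
    assume k: "p + 1 < idx k"
    have "\<bar>y$k\<bar> \<le> \<tau>"
    proof (rule ccontr)
      assume c: "\<not> \<bar>y$k\<bar> \<le> \<tau>"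
      have jk: "j \<noteq> k" using j k by auto
      have "(\<Sum>i\<in>{j,k}. max (\<bar>y$i\<bar> - \<tau>) 0) \<le> (\<Sum>i\<in>UNIV. max (\<bar>y$i\<bar> - \<tau>) 0)"
        by (rule sum_mono2) auto
      then have "max (\<bar>y$j\<bar> - \<tau>) 0 + max (\<bar>y$k\<bar> - \<tau>) 0 \<le> \<mu>"
        using jk phi by simp
      then have 1: "\<bar>y$j\<bar> - \<bar>y$k\<bar> < \<mu>" using c by linarith
      have yk2: "\<bar>y$k\<bar> \<le> 1 + \<eta> / real (idx k) + \<mu>" using yk[of k] k by simp
      have "\<eta> / real (p+1) - \<eta> / real (idx k) > 4 * \<mu>"
        apply (rule gap_lemma[where N=N])
        using k idx_le[of k] eta mu unfolding N_def by auto
      then show False using 1 yj yk2 mu by linarith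
    qed
    then show "g $ k = 0" by (rule P(4))
  qed
  show ?thesis using D E I by blast
qed

end
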